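(* Let $\Phi$ be a positive trace-preserving linear map from operators on a finite-dimensional Hilbert space $\mathcal{H}$ to operators on a finite-dimensional Hilbert space $\mathcal{H}'$. Let $\rho,\varphi$ be density operators on $\mathcal{H}$ with $S(\rho\Vert\varphi)<\infty$, $[\rho,\varphi]=0$ and $[\Phi(\rho),\Phi(\varphi)]=0$. Write $\rho=\sum_i p_i|i\rangle\langle i|$ and $\varphi=\sum_i r_i|i\rangle\langle i|$ in a common orthonormal eigenbasis, and $\Phi(\rho)=\sum_\phi p'_\phi|\phi\rangle\langle\phi|$ and $\Phi(\varphi)=\sum_\phi r'_\phi|\phi\rangle\langle\phi|$ in a common orthonormal eigenbasis. Let $p_\rho(i,\phi)=p_i\,\mathrm{tr}\{\Phi(|i\rangle\langle i|)|\phi\rangle\langle\phi|\}$ and, for $p_\rho(i,\phi)>0$, let $m(i,\phi)=(-\ln p'_\phi+\ln p_i)-(-\ln r'_\phi+\ln r_i)$. Then \[ \sum_{i,\phi:\,p_\rho(i,\phi)>0}p_\rho(i,\phi)\,e^{-m(i,\phi)}=\gamma, \] where $\gamma=\mathrm{tr}\{\Pi^\rho\,\mathcal{R}_\Phi^\varphi(\Phi(\rho))\}\in(0,1]$. Moreover, $\gamma=1$ when $\rho$ and $\varphi$ have the same support.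
   Context: $S(\rho\Vert\sigma)$ is the quantum relative entropy ($\mathrm{tr}\{\rho(\ln\rho-\ln\sigma)\}$ if $\mathrm{supp}\,\rho\subseteq\mathrm{supp}\,\sigma$, $+\infty$ otherwise). $\Pi^\rho$ is the orthogonal projection onto the support of $\rho$. The Petz recovery map with reference state $\varphi$ is $\mathcal{R}_\Phi^\varphi(X)=\varphi^{1/2}\Phi^\dagger\big(\Phi(\varphi)^{-1/2}X\Phi(\varphi)^{-1/2}\big)\varphi^{1/2}$, where $\Phi^\dagger$ is the Hilbert–Schmidt adjoint of $\Phi$ and inverses are taken on the support. *)

theory Defs
  imports "Jordan_Normal_Form.Matrix"
begin

definition mtrace :: "complex mat \<Rightarrow> complex" where
  "mtrace A = (\<Sum>i<dim_row A. A $$ (i,i))"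

definition dag :: "complex mat \<Rightarrow> complex mat" where
  "dag A = mat (dim_col A) (dim_row A) (\<lambda>(i,j). cnj (A $$ (j,i)))"

definition cinner :: "complex vec \<Rightarrow> complex vec \<Rightarrow> complex" where
  "cinner v w = (\<Sum>k<dim_vec v. cnj (v $ k) * w $ k)"

definition psd :: "nat \<Rightarrow> complex mat \<Rightarrow> bool" where
  "psd n A \<longleftrightarrow> A \<in> carrier_mat n n \<and> dag A = A \<and>
     (\<forall>v \<in> carrier_vec n. Im (cinner v (A *\<^sub>v v)) = 0 \<and> Re (cinner v (A *\<^sub>v v)) \<ge> 0)"

definition density :: "nat \<Rightarrow> complex mat \<Rightarrow> bool" where
  "density n A \<longleftrightarrow> psd n A \<and> mtrace A = 1"

definition ketbra :: "complex vec \<Rightarrow> complex mat" where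
  "ketbra u = mat (dim_vec u) (dim_vec u) (\<lambda>(a,b). u $ a * cnj (u $ b))"

definition onb :: "nat \<Rightarrow> (nat \<Rightarrow> complex vec) \<Rightarrow> bool" where
  "onb n u \<longleftrightarrow> (\<forall>i<n. u i \<in> carrier_vec n) \<and>
     (\<forall>i<n. \<forall>j<n. cinner (u i) (u j) = (if i = j then 1 else 0))"

definition spec_decomp :: "nat \<Rightarrow> complex mat \<Rightarrow> (nat \<Rightarrow> complex vec) \<Rightarrow> (nat \<Rightarrow> real) \<Rightarrow> bool" where
  "spec_decomp n A u p \<longleftrightarrow> onb n u \<and>
     A = mat n n (\<lambda>(a,b). \<Sum>i<n. complex_of_real (p i) * (u i $ a) * cnj (u i $ b))"

(* range (= support, for Hermitian matrices) *)
definition mat_range :: "complex mat \<Rightarrow> complex vec set" where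
  "mat_range A = {A *\<^sub>v x | x. x \<in> carrier_vec (dim_col A)}"

definition supp_proj :: "complex mat \<Rightarrow> complex mat" where
  "supp_proj A = (THE P. P \<in> carrier_mat (dim_row A) (dim_row A) \<and> P * P = P \<and> dag P = P
                       \<and> mat_range P = mat_range A)"

definition msqrt :: "complex mat \<Rightarrow> complex mat" where
  "msqrt A = (THE B. psd (dim_row A) B \<and> B * B = A)"

(* A^{-1/2}, inverse taken on the support *)
definition pinv_sqrt :: "complex mat \<Rightarrow> complex mat" where
  "pinv_sqrt A = (THE B. psd (dim_row A) B \<and> mat_range B = mat_range A \<and> B * msqrt A = supp_proj A)"

definition hs_adj :: "(complex mat \<Rightarrow> complex mat) \<Rightarrow> nat \<Rightarrow> complex mat \<Rightarrow> complex mat" where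
  "hs_adj \<Phi> n Y = (THE Z. Z \<in> carrier_mat n n \<and>
      (\<forall>X \<in> carrier_mat n n. mtrace (dag Z * X) = mtrace (dag Y * \<Phi> X)))"

definition petz :: "(complex mat \<Rightarrow> complex mat) \<Rightarrow> nat \<Rightarrow> complex mat \<Rightarrow> complex mat \<Rightarrow> complex mat" where
  "petz \<Phi> n \<phi> X = msqrt \<phi> * hs_adj \<Phi> n (pinv_sqrt (\<Phi> \<phi>) * X * pinv_sqrt (\<Phi> \<phi>)) * msqrt \<phi>"

definition pos_tp_map :: "nat \<Rightarrow> nat \<Rightarrow> (complex mat \<Rightarrow> complex mat) \<Rightarrow> bool" where
  "pos_tp_map n n' \<Phi> \<longleftrightarrow>
     (\<forall>X \<in> carrier_mat n n. \<Phi> X \<in> carrier_mat n' n') \<and>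
     (\<forall>X \<in> carrier_mat n n. \<forall>Y \<in> carrier_mat n n. \<Phi> (X + Y) = \<Phi> X + \<Phi> Y) \<and>
     (\<forall>c. \<forall>X \<in> carrier_mat n n. \<Phi> (c \<cdot>\<^sub>m X) = c \<cdot>\<^sub>m \<Phi> X) \<and>
     (\<forall>X. psd n X \<longrightarrow> psd n' (\<Phi> X)) \<and>
     (\<forall>X \<in> carrier_mat n n. mtrace (\<Phi> X) = mtrace X)"

(* S(rho||sigma) < infinity, which by definition holds iff supp rho \<subseteq> supp sigma *)
definition rel_entropy_finite :: "complex mat \<Rightarrow> complex mat \<Rightarrow> bool" where
  "rel_entropy_finite \<rho> \<sigma> \<longleftrightarrow> mat_range \<rho> \<subseteq> mat_range \<sigma>"

end

theory Submission
  imports Defs "Jordan_Normal_Form.Determinant"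
begin

lemma mv_idx: "A \<in> carrier_mat n m \<Longrightarrow> v \<in> carrier_vec m \<Longrightarrow> a < n \<Longrightarrow>
  (A *\<^sub>v v) $ a = (\<Sum>b<m. A $$ (a,b) * v $ b)"
  by (auto simp: scalar_prod_def atLeast0LessThan intro!: sum.cong)

lemma mm_idx: "A \<in> carrier_mat n m \<Longrightarrow> B \<in> carrier_mat m l \<Longrightarrow> a < n \<Longrightarrow> c < l \<Longrightarrow>
  (A * B) $$ (a,c) = (\<Sum>b<m. A $$ (a,b) * B $$ (b,c))"
  by (auto simp: scalar_prod_def atLeast0LessThan intro!: sum.cong)

lemma mtrace_carrier: "A \<in> carrier_mat n n \<Longrightarrow> mtrace A = (\<Sum>i<n. A $$ (i,i))"
  by (simp add: mtrace_def)

lemma mtrace_comm: "A \<in> carrier_mat n m \<Longrightarrow> B \<in> carrier_mat m n \<Longrightarrow> mtrace (A * B) = mtrace (B * A)"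
proof -
  assume A: "A \<in> carrier_mat n m" and B: "B \<in> carrier_mat m n"
  have "mtrace (A * B) = (\<Sum>i<n. \<Sum>j<m. A $$ (i,j) * B $$ (j,i))"
    using A B by (simp del: index_mult_mat add: mtrace_carrier[of _ n] mm_idx)
  also have "\<dots> = (\<Sum>j<m. \<Sum>i<n. B $$ (j,i) * A $$ (i,j))"
    by (subst sum.swap) (simp add: mult.commute)
  also have "\<dots> = mtrace (B * A)"
    using A B by (simp del: index_mult_mat add: mtrace_carrier[of _ m] mm_idx)
  finally show ?thesis .
qed

lemma mtrace_add: "A \<in> carrier_mat n n \<Longrightarrow> B \<in> carrier_mat n n \<Longrightarrow> mtrace (A + B) = mtrace A + mtrace B"
  by (simp add: mtrace_def sum.distrib)

lemma mtrace_smult: "A \<in> carrier_mat n n \<Longrightarrow> mtrace (c \<cdot>\<^sub>m A) = c * mtrace A"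
  by (simp add: mtrace_def sum_distrib_left)

lemma dag_carrier[simp]: "A \<in> carrier_mat n m \<Longrightarrow> dag A \<in> carrier_mat m n"
  by (simp add: dag_def)

lemma dag_dims[simp]: "dim_row (dag A) = dim_col A" "dim_col (dag A) = dim_row A"
  by (auto simp: dag_def)

lemma dag_mv_idx: "A \<in> carrier_mat n m \<Longrightarrow> x \<in> carrier_vec n \<Longrightarrow> b < m \<Longrightarrow>
  (dag A *\<^sub>v x) $ b = (\<Sum>a<n. cnj (A $$ (a,b)) * x $ a)"
  by (auto simp: scalar_prod_def atLeast0LessThan dag_def intro!: sum.cong)

lemma dag_idx: "A \<in> carrier_mat n m \<Longrightarrow> a < m \<Longrightarrow> b < n \<Longrightarrow> dag A $$ (a,b) = cnj (A $$ (b,a))"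
  by (simp add: dag_def)

lemma dag_dag: "A \<in> carrier_mat n m \<Longrightarrow> dag (dag A) = A"
  by (rule eq_matI) (auto simp: dag_def)

lemma cinner_carrier: "v \<in> carrier_vec n \<Longrightarrow> cinner v w = (\<Sum>k<n. cnj (v $ k) * w $ k)"
  by (simp add: cinner_def)

lemma cinner_sym: "v \<in> carrier_vec n \<Longrightarrow> w \<in> carrier_vec n \<Longrightarrow> cinner v w = cnj (cinner w v)"
  by (simp add: cinner_def mult.commute)

lemma cinner_smult_right: "v \<in> carrier_vec n \<Longrightarrow> w \<in> carrier_vec n \<Longrightarrow> cinner v (c \<cdot>\<^sub>v w) = c * cinner v w"
  by (simp add: cinner_def sum_distrib_left mult.left_commute)

lemma cinner_smult_left: "v \<in> carrier_vec n \<Longrightarrow> w \<in> carrier_vec n \<Longrightarrow> cinner (c \<cdot>\<^sub>v v) w = cnj c * cinner v w"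
  by (simp add: cinner_def sum_distrib_left mult.assoc)

lemma cinner_zero_left: "w \<in> carrier_vec n \<Longrightarrow> cinner (0\<^sub>v n) w = 0"
  by (simp add: cinner_def)

lemma cinner_dag: "A \<in> carrier_mat n m \<Longrightarrow> x \<in> carrier_vec n \<Longrightarrow> y \<in> carrier_vec m \<Longrightarrow>
  cinner x (A *\<^sub>v y) = cinner (dag A *\<^sub>v x) y"
proof -
  assume A: "A \<in> carrier_mat n m" and x: "x \<in> carrier_vec n" and y: "y \<in> carrier_vec m"
  have "cinner x (A *\<^sub>v y) = (\<Sum>a<n. \<Sum>b<m. cnj (x $ a) * A $$ (a,b) * y $ b)"
    using A x y by (simp del: index_mult_mat_vec add: cinner_carrier[OF x] mv_idx sum_distrib_left mult.assoc)
  also have "\<dots> = (\<Sum>b<m. \<Sum>a<n. cnj (x $ a) * A $$ (a,b) * y $ b)"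
    by (rule sum.swap)
  also have "\<dots> = cinner (dag A *\<^sub>v x) y"
    using A x y by (simp del: index_mult_mat_vec add: cinner_def dag_mv_idx sum_distrib_right sum_distrib_left mult.commute mult.left_commute)
  finally show ?thesis .
qed

lemma cinner_self_real: "cinner x x = complex_of_real (\<Sum>k<dim_vec x. (cmod (x $ k))^2)"
  unfolding cinner_def of_real_sum
  by (rule sum.cong) (auto simp del: of_real_power simp: complex_norm_square mult.commute)

lemma cinner_self_zero: "x \<in> carrier_vec n \<Longrightarrow> cinner x x = 0 \<Longrightarrow> x = 0\<^sub>v n"
proof -
  assume x: "x \<in> carrier_vec n" and z: "cinner x x = 0"
  have "(\<Sum>k<dim_vec x. (cmod (x $ k))^2) = 0" using z unfolding cinner_self_real of_real_eq_0_iff .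
  hence "\<forall>k\<in>{..<dim_vec x}. (cmod (x $ k))^2 = 0"
    by (subst (asm) sum_nonneg_eq_0_iff) auto
  thus ?thesis using x by (auto intro!: eq_vecI)
qed


lemma onb_carrier: "onb n u \<Longrightarrow> i < n \<Longrightarrow> u i \<in> carrier_vec n"
  by (simp add: onb_def)

lemma onb_inner: "onb n u \<Longrightarrow> i < n \<Longrightarrow> j < n \<Longrightarrow> cinner (u i) (u j) = (if i = j then 1 else 0)"
  by (simp add: onb_def)

lemma onb_inner_sum: "onb n u \<Longrightarrow> i < n \<Longrightarrow> j < n \<Longrightarrow> (\<Sum>b<n. cnj (u i $ b) * u j $ b) = (if i = j then 1 else 0)"
  using onb_inner[of n u i j] onb_carrier[of n u i] by (simp add: cinner_carrier)

lemma onb_complete: assumes "onb n u" "a < n" "b < n"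
  shows "(\<Sum>i<n. u i $ a * cnj (u i $ b)) = (if a = b then 1 else 0)"
proof -
  define U where "U = mat n n (\<lambda>(a,i). u i $ a)"
  define V where "V = mat n n (\<lambda>(i,b). cnj (u i $ b))"
  have U: "U \<in> carrier_mat n n" and V: "V \<in> carrier_mat n n" by (auto simp: U_def V_def)
  have "V * U = 1\<^sub>m n"
  proof (rule eq_matI)
    fix i j assume "i < dim_row (1\<^sub>m n)" "j < dim_col (1\<^sub>m n)"
    hence ij: "i < n" "j < n" by auto
    have "(V * U) $$ (i,j) = (\<Sum>a<n. cnj (u i $ a) * u j $ a)"
      using U V ij by (simp del: index_mult_mat add: mm_idx) (auto simp: U_def V_def intro!: sum.cong)
    also have "\<dots> = 1\<^sub>m n $$ (i,j)" using onb_inner_sum[OF assms(1) ij] ij by simp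
    finally show "(V * U) $$ (i,j) = 1\<^sub>m n $$ (i,j)" .
  qed (auto simp: U_def V_def)
  hence UV: "U * V = 1\<^sub>m n" by (rule mat_mult_left_right_inverse[OF V U])
  have "(U * V) $$ (a,b) = (\<Sum>i<n. u i $ a * cnj (u i $ b))"
    using assms U V by (simp del: index_mult_mat add: mm_idx) (auto simp: U_def V_def intro!: sum.cong)
  thus ?thesis using UV assms by simp
qed

lemma onb_expand_mat: assumes "onb n u" "A \<in> carrier_mat m n" "a < m" "b < n"
  shows "A $$ (a,b) = (\<Sum>i<n. (A *\<^sub>v u i) $ a * cnj (u i $ b))"
proof -
  have "(\<Sum>i<n. (A *\<^sub>v u i) $ a * cnj (u i $ b)) = (\<Sum>i<n. \<Sum>c<n. A $$ (a,c) * (u i $ c * cnj (u i $ b)))"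
    using assms onb_carrier[OF assms(1)]
    by (auto simp del: index_mult_mat_vec simp: mv_idx sum_distrib_right mult.assoc intro!: sum.cong)
  also have "\<dots> = (\<Sum>c<n. A $$ (a,c) * (\<Sum>i<n. u i $ c * cnj (u i $ b)))"
    by (subst sum.swap) (simp add: sum_distrib_left)
  also have "\<dots> = (\<Sum>c<n. A $$ (a,c) * (if c = b then 1 else 0))"
    using assms by (auto simp: onb_complete intro!: sum.cong)
  also have "\<dots> = A $$ (a,b)" using assms by (simp add: if_distrib cong: if_cong)
  finally show ?thesis by simp
qed

lemma mat_eq_onb: assumes "onb n u" "A \<in> carrier_mat m n" "B \<in> carrier_mat m n"
  "\<And>i. i < n \<Longrightarrow> A *\<^sub>v u i = B *\<^sub>v u i"
  shows "A = B"
proof (rule eq_matI)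
  fix a b assume "a < dim_row B" "b < dim_col B"
  hence ab: "a < m" "b < n" using assms by auto
  show "A $$ (a,b) = B $$ (a,b)"
    using onb_expand_mat[OF assms(1) assms(2) ab] onb_expand_mat[OF assms(1) assms(3) ab] assms(4)
    by simp
qed (use assms in auto)

lemma trace_onb: assumes "onb n u" "A \<in> carrier_mat n n"
  shows "mtrace A = (\<Sum>i<n. cinner (u i) (A *\<^sub>v u i))"
proof -
  have "mtrace A = (\<Sum>a<n. \<Sum>i<n. (A *\<^sub>v u i) $ a * cnj (u i $ a))"
    unfolding mtrace_carrier[OF assms(2)] by (intro sum.cong refl onb_expand_mat[OF assms]) auto
  also have "\<dots> = (\<Sum>i<n. \<Sum>a<n. cnj (u i $ a) * (A *\<^sub>v u i) $ a)"
    by (subst sum.swap) (simp add: mult.commute)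
  also have "\<dots> = (\<Sum>i<n. cinner (u i) (A *\<^sub>v u i))"
    by (intro sum.cong refl) (simp add: cinner_carrier[OF onb_carrier[OF assms(1)]])
  finally show ?thesis .
qed

definition sd :: "nat \<Rightarrow> (nat \<Rightarrow> complex vec) \<Rightarrow> (nat \<Rightarrow> real) \<Rightarrow> complex mat" where
  "sd n u f = mat n n (\<lambda>(a,b). \<Sum>i<n. complex_of_real (f i) * (u i $ a) * cnj (u i $ b))"

lemma spec_decomp_sd: "spec_decomp n A u f \<longleftrightarrow> onb n u \<and> A = sd n u f"
  by (simp add: spec_decomp_def sd_def)

lemma sd_carrier[simp]: "sd n u f \<in> carrier_mat n n"
  by (simp add: sd_def)

lemma sd_dims[simp]: "dim_row (sd n u f) = n" "dim_col (sd n u f) = n"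
  by (auto simp: sd_def)

lemma sd_idx: "a < n \<Longrightarrow> b < n \<Longrightarrow> sd n u f $$ (a,b) = (\<Sum>i<n. complex_of_real (f i) * (u i $ a) * cnj (u i $ b))"
  by (simp add: sd_def)

lemma sd_mv: assumes "onb n u" "j < n"
  shows "sd n u f *\<^sub>v u j = complex_of_real (f j) \<cdot>\<^sub>v u j"
proof (rule eq_vecI)
  fix a assume "a < dim_vec (complex_of_real (f j) \<cdot>\<^sub>v u j)"
  hence a: "a < n" using onb_carrier[OF assms] by simp
  have "(sd n u f *\<^sub>v u j) $ a = (\<Sum>b<n. \<Sum>i<n. complex_of_real (f i) * u i $ a * (cnj (u i $ b) * u j $ b))"
    using a onb_carrier[OF assms]
    by (auto simp del: index_mult_mat_vec simp: mv_idx[of _ n n] sd_idx sum_distrib_right mult.assoc intro!: sum.cong)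
  also have "\<dots> = (\<Sum>i<n. complex_of_real (f i) * u i $ a * (\<Sum>b<n. cnj (u i $ b) * u j $ b))"
    by (subst sum.swap) (simp add: sum_distrib_left)
  also have "\<dots> = (\<Sum>i<n. complex_of_real (f i) * u i $ a * (if i = j then 1 else 0))"
    using assms by (auto simp: onb_inner_sum intro!: sum.cong)
  also have "\<dots> = complex_of_real (f j) * u j $ a" using assms by (simp add: if_distrib cong: if_cong)
  finally show "(sd n u f *\<^sub>v u j) $ a = (complex_of_real (f j) \<cdot>\<^sub>v u j) $ a"
    using a onb_carrier[OF assms] by simp
qed (use onb_carrier[OF assms] in simp)

lemma dag_sd: "dag (sd n u f) = sd n u f"
  by (rule eq_matI) (auto simp: dag_def sd_def mult.commute mult.left_commute)

lemma cinner_sd: assumes "x \<in> carrier_vec n" and o: "onb n u"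
  shows "cinner x (sd n u f *\<^sub>v x) = complex_of_real (\<Sum>i<n. f i * (cmod (cinner (u i) x))^2)"
proof -
  have "cinner x (sd n u f *\<^sub>v x) = (\<Sum>a<n. \<Sum>b<n. \<Sum>i<n. complex_of_real (f i) * (cnj (x $ a) * u i $ a) * (cnj (u i $ b) * x $ b))"
    using assms
    by (auto simp del: index_mult_mat_vec simp: cinner_carrier[OF assms(1)] mv_idx[of _ n n] sd_idx sum_distrib_right sum_distrib_left mult.assoc mult.left_commute intro!: sum.cong)
  also have "\<dots> = (\<Sum>i<n. complex_of_real (f i) * ((\<Sum>a<n. cnj (x $ a) * u i $ a) * (\<Sum>b<n. cnj (u i $ b) * x $ b)))"
  proof -
    have "(\<Sum>a<n. \<Sum>b<n. \<Sum>i<n. complex_of_real (f i) * (cnj (x $ a) * u i $ a) * (cnj (u i $ b) * x $ b))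
      = (\<Sum>a<n. \<Sum>i<n. \<Sum>b<n. complex_of_real (f i) * (cnj (x $ a) * u i $ a) * (cnj (u i $ b) * x $ b))"
      by (rule sum.cong, simp, rule sum.swap)
    also have "\<dots> = (\<Sum>i<n. \<Sum>a<n. \<Sum>b<n. complex_of_real (f i) * (cnj (x $ a) * u i $ a) * (cnj (u i $ b) * x $ b))"
      by (rule sum.swap)
    also have "\<dots> = (\<Sum>i<n. complex_of_real (f i) * ((\<Sum>a<n. cnj (x $ a) * u i $ a) * (\<Sum>b<n. cnj (u i $ b) * x $ b)))"
      by (auto simp: sum_distrib_left sum_distrib_right mult_ac intro!: sum.cong)
    finally show ?thesis .
  qed
  also have "\<dots> = (\<Sum>i<n. complex_of_real (f i) * (cnj (cinner (u i) x) * cinner (u i) x))"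
    by (rule sum.cong) (auto simp: cinner_carrier[OF onb_carrier[OF o]] cinner_carrier[OF assms(1)] mult.commute)
  also have "\<dots> = complex_of_real (\<Sum>i<n. f i * (cmod (cinner (u i) x))^2)"
    unfolding of_real_sum
    by (rule sum.cong) (auto simp del: of_real_power simp: complex_norm_square mult.commute)
  finally show ?thesis .
qed

lemma psd_sd: assumes "\<And>i. i < n \<Longrightarrow> f i \<ge> 0" "onb n u" shows "psd n (sd n u f)"
  unfolding psd_def using assms by (auto simp: dag_sd cinner_sd intro!: sum_nonneg)

lemma sd_mult: assumes "onb n u" shows "sd n u f * sd n u g = sd n u (\<lambda>i. f i * g i)"
proof (rule mat_eq_onb[OF assms])
  fix i assume i: "i < n"
  have ui: "u i \<in> carrier_vec n" using onb_carrier[OF assms i] .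
  show "sd n u f * sd n u g *\<^sub>v u i = sd n u (\<lambda>i. f i * g i) *\<^sub>v u i"
    using ui by (simp add: assoc_mult_mat_vec[of _ n n _ n] sd_mv[OF assms i] mult_mat_vec[of _ n n] smult_smult_assoc mult.commute)
qed auto


lemma sd_cong: "(\<And>i. i < n \<Longrightarrow> f i = g i) \<Longrightarrow> sd n u f = sd n u g"
  unfolding sd_def by (intro cong_mat refl) (auto intro!: sum.cong)

lemma range_mult: assumes "A \<in> carrier_mat n m" "B \<in> carrier_mat m k"
  shows "mat_range (A * B) \<subseteq> mat_range A"
proof
  fix v assume "v \<in> mat_range (A * B)"
  then obtain x where x: "x \<in> carrier_vec k" "v = (A * B) *\<^sub>v x" using assms by (auto simp: mat_range_def)
  hence "v = A *\<^sub>v (B *\<^sub>v x)" using assms by simp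
  moreover have "B *\<^sub>v x \<in> carrier_vec (dim_col A)" using assms x by simp
  ultimately show "v \<in> mat_range A" unfolding mat_range_def by blast
qed

lemma range_sd_eq: assumes o: "onb n u" and fg: "\<And>i. i < n \<Longrightarrow> (f i \<noteq> 0) = (g i \<noteq> 0)"
  shows "mat_range (sd n u f) = mat_range (sd n u g)"
proof -
  have "sd n u f = sd n u g * sd n u (\<lambda>i. if g i \<noteq> 0 then f i / g i else 0)"
    unfolding sd_mult[OF o] by (rule sd_cong) (use fg in auto)
  moreover have "sd n u g = sd n u f * sd n u (\<lambda>i. if f i \<noteq> 0 then g i / f i else 0)"
    unfolding sd_mult[OF o] by (rule sd_cong) (use fg in auto)
  ultimately show ?thesis using range_mult[OF sd_carrier sd_carrier] by (metis subset_antisym)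
qed

lemma eig_in_range: assumes o: "onb n u" and j: "j < n" and f: "f j \<noteq> 0"
  shows "u j \<in> mat_range (sd n u f)"
proof -
  have uj: "u j \<in> carrier_vec n" using onb_carrier[OF o j] .
  have "sd n u f *\<^sub>v (complex_of_real (1 / f j) \<cdot>\<^sub>v u j) = u j"
    using uj f by (simp add: mult_mat_vec[of _ n n] sd_mv[OF o j] smult_smult_assoc)
  moreover have "complex_of_real (1 / f j) \<cdot>\<^sub>v u j \<in> carrier_vec (dim_col (sd n u f))" using uj by simp
  ultimately show ?thesis unfolding mat_range_def by (metis (mono_tags, lifting) mem_Collect_eq)
qed

lemma herm_self_inner: assumes "H \<in> carrier_mat n n" "dag H = H" "v \<in> carrier_vec n"
  shows "cinner (H *\<^sub>v v) (H *\<^sub>v v) = cinner v (H *\<^sub>v (H *\<^sub>v v))"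
  using cinner_dag[OF assms(1) assms(3), of "H *\<^sub>v v"] assms by simp

lemma kill: assumes H: "H \<in> carrier_mat n n" "dag H = H" and A: "A \<in> carrier_mat n n" "dag A = A"
  and r: "mat_range H \<subseteq> mat_range A" and v: "v \<in> carrier_vec n" and Av: "A *\<^sub>v v = 0\<^sub>v n"
  shows "H *\<^sub>v v = 0\<^sub>v n"
proof -
  have "H *\<^sub>v (H *\<^sub>v v) \<in> mat_range H" unfolding mat_range_def using H v by auto
  with r obtain y where y: "y \<in> carrier_vec n" "H *\<^sub>v (H *\<^sub>v v) = A *\<^sub>v y"
    using A unfolding mat_range_def by auto
  have "cinner (H *\<^sub>v v) (H *\<^sub>v v) = cinner v (A *\<^sub>v y)" using herm_self_inner[OF H v] y by simp
  also have "\<dots> = cinner (A *\<^sub>v v) y" using cinner_dag[OF A(1) v y(1)] A by simp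
  also have "\<dots> = 0" using Av cinner_zero_left[OF y(1)] by simp
  finally show ?thesis using cinner_self_zero[of "H *\<^sub>v v" n] mult_mat_vec_carrier[OF H(1) v] by simp
qed

lemma psd_herm: "psd n B \<Longrightarrow> B \<in> carrier_mat n n \<and> dag B = B"
  by (simp add: psd_def)

lemma sqrt_unique_vec: assumes B: "psd n B" and v: "v \<in> carrier_vec n" and s: "s \<ge> 0"
  and BB: "B *\<^sub>v (B *\<^sub>v v) = complex_of_real (s^2) \<cdot>\<^sub>v v"
  shows "B *\<^sub>v v = complex_of_real s \<cdot>\<^sub>v v"
proof (cases "s = 0")
  case True
  have Bc: "B \<in> carrier_mat n n" "dag B = B" using psd_herm[OF B] by auto
  have "cinner (B *\<^sub>v v) (B *\<^sub>v v) = cinner v (0 \<cdot>\<^sub>v v)"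
    using herm_self_inner[OF Bc v] BB True v by simp
  also have "\<dots> = 0" by (simp add: cinner_def)
  finally have "B *\<^sub>v v = 0\<^sub>v n" using cinner_self_zero[of "B *\<^sub>v v" n] mult_mat_vec_carrier[OF Bc(1) v] by simp
  thus ?thesis using True v by (auto intro!: eq_vecI)
next
  case False
  hence sp: "s > 0" using s by simp
  have Bc: "B \<in> carrier_mat n n" "dag B = B" using psd_herm[OF B] by auto
  define x where "x = B *\<^sub>v v - complex_of_real s \<cdot>\<^sub>v v"
  have xc: "x \<in> carrier_vec n" using Bc v by (simp add: x_def)
  have Bx: "B *\<^sub>v x = complex_of_real (- s) \<cdot>\<^sub>v x"
  proof -
    have "B *\<^sub>v x = B *\<^sub>v (B *\<^sub>v v) - complex_of_real s \<cdot>\<^sub>v (B *\<^sub>v v)"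
      unfolding x_def using Bc v
      by (simp add: mult_minus_distrib_mat_vec[of _ n n] mult_mat_vec[of _ n n])
    also have "\<dots> = complex_of_real (- s) \<cdot>\<^sub>v x"
      unfolding BB x_def using Bc v by (intro eq_vecI) (auto simp: power2_eq_square algebra_simps)
    finally show ?thesis .
  qed
  have "cinner x (B *\<^sub>v x) = complex_of_real (- s) * cinner x x"
    unfolding Bx using cinner_smult_right[OF xc xc] by simp
  moreover have "Re (cinner x (B *\<^sub>v x)) \<ge> 0" using B xc by (simp add: psd_def)
  moreover obtain N where N: "cinner x x = complex_of_real N" "N \<ge> 0"
    using cinner_self_real[of x] by (metis (no_types, lifting) sum_nonneg zero_le_power2)
  ultimately have "- s * N \<ge> 0" by simp
  hence "N = 0" using sp N(2) by (simp add: mult_le_0_iff)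
  hence "x = 0\<^sub>v n" using cinner_self_zero[OF xc] N by simp
  have z: "(B *\<^sub>v v) $ i = complex_of_real s * v $ i" if i: "i < n" for i
  proof -
    have "x $ i = 0" using \<open>x = 0\<^sub>v n\<close> i by simp
    thus ?thesis using i Bc v unfolding x_def by simp
  qed
  show ?thesis by (rule eq_vecI) (use z Bc v in auto)
qed

lemma msqrt_sd: assumes o: "onb n u" and f: "\<And>i. i < n \<Longrightarrow> f i \<ge> 0"
  shows "msqrt (sd n u f) = sd n u (\<lambda>i. sqrt (f i))"
  unfolding msqrt_def sd_dims
proof (rule the_equality)
  show "psd n (sd n u (\<lambda>i. sqrt (f i))) \<and> sd n u (\<lambda>i. sqrt (f i)) * sd n u (\<lambda>i. sqrt (f i)) = sd n u f"
    using f by (auto simp: psd_sd[OF _ o] sd_mult[OF o] intro!: sd_cong)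
next
  fix B assume B: "psd n B \<and> B * B = sd n u f"
  have Bc: "B \<in> carrier_mat n n" using B psd_herm by blast
  show "B = sd n u (\<lambda>i. sqrt (f i))"
  proof (rule mat_eq_onb[OF o Bc sd_carrier])
    fix j assume j: "j < n"
    have uj: "u j \<in> carrier_vec n" using onb_carrier[OF o j] .
    have "B *\<^sub>v (B *\<^sub>v u j) = complex_of_real ((sqrt (f j))^2) \<cdot>\<^sub>v u j"
      using B Bc uj f[OF j] by (simp add: assoc_mult_mat_vec[symmetric, of _ n n _ n] sd_mv[OF o j])
    from sqrt_unique_vec[OF conjunct1[OF B] uj _ this] f[OF j]
    show "B *\<^sub>v u j = sd n u (\<lambda>i. sqrt (f i)) *\<^sub>v u j" by (simp add: sd_mv[OF o j])
  qed
qed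

lemma supp_proj_sd: assumes o: "onb n u"
  shows "supp_proj (sd n u f) = sd n u (\<lambda>i. if f i \<noteq> 0 then 1 else 0)"
  unfolding supp_proj_def sd_dims
proof (rule the_equality)
  show "sd n u (\<lambda>i. if f i \<noteq> 0 then 1 else 0) \<in> carrier_mat n n \<and>
    sd n u (\<lambda>i. if f i \<noteq> 0 then 1 else 0) * sd n u (\<lambda>i. if f i \<noteq> 0 then 1 else 0) = sd n u (\<lambda>i. if f i \<noteq> 0 then 1 else 0) \<and>
    dag (sd n u (\<lambda>i. if f i \<noteq> 0 then 1 else 0)) = sd n u (\<lambda>i. if f i \<noteq> 0 then 1 else 0) \<and>
    mat_range (sd n u (\<lambda>i. if f i \<noteq> 0 then 1 else 0)) = mat_range (sd n u f)"
    by (auto simp: sd_mult[OF o] dag_sd intro!: sd_cong range_sd_eq[OF o])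
next
  fix P assume P: "P \<in> carrier_mat n n \<and> P * P = P \<and> dag P = P \<and> mat_range P = mat_range (sd n u f)"
  show "P = sd n u (\<lambda>i. if f i \<noteq> 0 then 1 else 0)"
  proof (rule mat_eq_onb[OF o _ sd_carrier])
    show Pc: "P \<in> carrier_mat n n" using P by simp
    fix j assume j: "j < n"
    have uj: "u j \<in> carrier_vec n" using onb_carrier[OF o j] .
    show "P *\<^sub>v u j = sd n u (\<lambda>i. if f i \<noteq> 0 then 1 else 0) *\<^sub>v u j"
    proof (cases "f j \<noteq> 0")
      case True
      hence "u j \<in> mat_range P" using eig_in_range[OF o j] P by simp
      then obtain y where y: "y \<in> carrier_vec n" "u j = P *\<^sub>v y" using Pc unfolding mat_range_def by auto
      have "P *\<^sub>v u j = (P * P) *\<^sub>v y" using y Pc by simp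
      also have "\<dots> = u j" using P y by simp
      finally show ?thesis using True uj by (simp add: sd_mv[OF o j])
    next
      case False
      have "sd n u f *\<^sub>v u j = 0\<^sub>v n" using False uj by (auto simp: sd_mv[OF o j])
      from kill[OF Pc _ sd_carrier dag_sd _ uj this] P
      show ?thesis using False uj by (auto simp: sd_mv[OF o j])
    qed
  qed
qed

lemma pinv_sqrt_sd: assumes o: "onb n u" and f: "\<And>i. i < n \<Longrightarrow> f i \<ge> 0"
  shows "pinv_sqrt (sd n u f) = sd n u (\<lambda>i. if f i \<noteq> 0 then 1 / sqrt (f i) else 0)"
proof -
  have ms: "msqrt (sd n u f) = sd n u (\<lambda>i. sqrt (f i))" by (rule msqrt_sd[OF o]) (rule f)
  show ?thesis
  unfolding pinv_sqrt_def sd_dims supp_proj_sd[OF o] ms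
proof (rule the_equality)

  show "psd n (sd n u (\<lambda>i. if f i \<noteq> 0 then 1 / sqrt (f i) else 0)) \<and>
    mat_range (sd n u (\<lambda>i. if f i \<noteq> 0 then 1 / sqrt (f i) else 0)) = mat_range (sd n u f) \<and>
    sd n u (\<lambda>i. if f i \<noteq> 0 then 1 / sqrt (f i) else 0) * sd n u (\<lambda>i. sqrt (f i)) =
    sd n u (\<lambda>i. if f i \<noteq> 0 then 1 else 0)"
  proof (intro conjI)
    show "psd n (sd n u (\<lambda>i. if f i \<noteq> 0 then 1 / sqrt (f i) else 0))"
    proof (rule psd_sd[OF _ o])
      fix i assume i: "i < n"
      show "0 \<le> (if f i \<noteq> 0 then 1 / sqrt (f i) else 0)" using f[OF i] by simp
    qed
    show "mat_range (sd n u (\<lambda>i. if f i \<noteq> 0 then 1 / sqrt (f i) else 0)) = mat_range (sd n u f)"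
    proof (rule range_sd_eq[OF o])
      fix i assume i: "i < n"
      show "((if f i \<noteq> 0 then 1 / sqrt (f i) else 0) \<noteq> 0) = (f i \<noteq> 0)" using f[OF i] by simp
    qed
    show "sd n u (\<lambda>i. if f i \<noteq> 0 then 1 / sqrt (f i) else 0) * sd n u (\<lambda>i. sqrt (f i)) =
      sd n u (\<lambda>i. if f i \<noteq> 0 then 1 else 0)"
      unfolding sd_mult[OF o]
    proof (rule sd_cong)
      fix i assume i: "i < n"
      show "(if f i \<noteq> 0 then 1 / sqrt (f i) else 0) * sqrt (f i) = (if f i \<noteq> 0 then 1 else 0)"
        using f[OF i] by simp
    qed
  qed
next
  fix B assume B: "psd n B \<and> mat_range B = mat_range (sd n u f) \<and>
     B * sd n u (\<lambda>i. sqrt (f i)) = sd n u (\<lambda>i. if f i \<noteq> 0 then 1 else 0)"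
  have Bc: "B \<in> carrier_mat n n" "dag B = B" using B psd_herm by blast+
  show "B = sd n u (\<lambda>i. if f i \<noteq> 0 then 1 / sqrt (f i) else 0)"
  proof (rule mat_eq_onb[OF o Bc(1) sd_carrier])
    fix j assume j: "j < n"
    have uj: "u j \<in> carrier_vec n" using onb_carrier[OF o j] .
    show "B *\<^sub>v u j = sd n u (\<lambda>i. if f i \<noteq> 0 then 1 / sqrt (f i) else 0) *\<^sub>v u j"
    proof (cases "f j \<noteq> 0")
      case True
      have "complex_of_real (sqrt (f j)) \<cdot>\<^sub>v (B *\<^sub>v u j) = (B * sd n u (\<lambda>i. sqrt (f i))) *\<^sub>v u j"
        using Bc uj by (simp add: assoc_mult_mat_vec[of _ n n _ n] sd_mv[OF o j] mult_mat_vec[of _ n n])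
      also have "\<dots> = u j" using B uj True by (simp add: sd_mv[OF o j])
      finally have e: "complex_of_real (sqrt (f j)) \<cdot>\<^sub>v (B *\<^sub>v u j) = u j" .
      have sp: "sqrt (f j) \<noteq> 0" using True f[OF j] by simp
      have "B *\<^sub>v u j = complex_of_real (1 / sqrt (f j)) \<cdot>\<^sub>v (complex_of_real (sqrt (f j)) \<cdot>\<^sub>v (B *\<^sub>v u j))"
        using sp Bc uj by (simp add: smult_smult_assoc)
      hence "B *\<^sub>v u j = complex_of_real (1 / sqrt (f j)) \<cdot>\<^sub>v u j" by (simp only: e)
      thus ?thesis using True by (simp add: sd_mv[OF o j])
    next
      case False
      have "sd n u f *\<^sub>v u j = 0\<^sub>v n" using False uj by (auto simp: sd_mv[OF o j])
      from kill[OF Bc sd_carrier dag_sd _ uj this] B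
      show ?thesis using False uj by (auto simp: sd_mv[OF o j])
    qed
  qed
qed
qed


definition Emat :: "nat \<Rightarrow> nat \<Rightarrow> nat \<Rightarrow> complex mat" where
  "Emat n a b = mat n n (\<lambda>(c,d). if c = a \<and> d = b then 1 else 0)"

definition trunc :: "nat \<Rightarrow> complex mat \<Rightarrow> (nat \<times> nat) set \<Rightarrow> complex mat" where
  "trunc n X K = mat n n (\<lambda>(c,d). if (c,d) \<in> K then X $$ (c,d) else 0)"

lemma Emat_carrier[simp]: "Emat n a b \<in> carrier_mat n n" by (simp add: Emat_def)
lemma trunc_carrier[simp]: "trunc n X K \<in> carrier_mat n n" by (simp add: trunc_def)

lemma trunc_empty: "trunc n X {} = 0\<^sub>m n n"
  by (rule eq_matI) (auto simp: trunc_def)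

lemma trunc_insert: "trunc n X (insert x K) = trunc n X K + (X $$ x) \<cdot>\<^sub>m Emat n (fst x) (snd x)"
  if "x \<notin> K" using that by (intro eq_matI) (auto simp: trunc_def Emat_def)

lemma trunc_full: "X \<in> carrier_mat n n \<Longrightarrow> trunc n X ({..<n} \<times> {..<n}) = X"
  by (rule eq_matI) (auto simp: trunc_def)

lemma mtrace_dag_mult: assumes "Z \<in> carrier_mat n n" "X \<in> carrier_mat n n"
  shows "mtrace (dag Z * X) = (\<Sum>a<n. \<Sum>b<n. cnj (Z $$ (b,a)) * X $$ (b,a))"
proof -
  have c: "dag Z * X \<in> carrier_mat n n" using assms by (metis dag_carrier mult_carrier_mat)
  show ?thesis unfolding mtrace_carrier[OF c]
    by (intro sum.cong refl) (use assms in \<open>simp del: index_mult_mat add: mm_idx[of _ n n] dag_idx\<close>)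
qed

lemma mtrace_dag_E: assumes "Z \<in> carrier_mat n n" "a < n" "b < n"
  shows "mtrace (dag Z * Emat n a b) = cnj (Z $$ (a,b))"
proof -
  have "mtrace (dag Z * Emat n a b) = (\<Sum>c<n. \<Sum>d<n. cnj (Z $$ (d,c)) * (if d = a \<and> c = b then 1 else 0))"
    using assms by (simp add: mtrace_dag_mult Emat_def)
  also have "\<dots> = (\<Sum>c<n. if c = b then cnj (Z $$ (a,c)) else 0)"
    using assms by (intro sum.cong refl) (case_tac "x = b", simp_all add: sum.delta if_distrib cong: if_cong)
  also have "\<dots> = cnj (Z $$ (a,b))" using assms by (simp add: sum.delta)
  finally show ?thesis .
qed

lemma pos_tp_zero: assumes "pos_tp_map n n' \<Phi>" shows "\<Phi> (0\<^sub>m n n) = 0\<^sub>m n' n'"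
proof -
  have z: "0\<^sub>m n n = (0::complex) \<cdot>\<^sub>m 0\<^sub>m n n" by (rule eq_matI) auto
  have "\<Phi> (0\<^sub>m n n) = 0 \<cdot>\<^sub>m \<Phi> (0\<^sub>m n n)" using assms unfolding pos_tp_map_def
    by (metis z zero_carrier_mat)
  also have "\<dots> = 0\<^sub>m n' n'"
  proof -
    have c: "\<Phi> (0\<^sub>m n n) \<in> carrier_mat n' n'" using assms unfolding pos_tp_map_def by auto
    show ?thesis using c by (intro eq_matI) auto
  qed
  finally show ?thesis .
qed

lemma F_trunc: assumes P: "pos_tp_map n n' \<Phi>" and Y: "Y \<in> carrier_mat n' n'" and K: "finite K"
  shows "mtrace (dag Y * \<Phi> (trunc n X K)) = (\<Sum>x\<in>K. X $$ x * mtrace (dag Y * \<Phi> (Emat n (fst x) (snd x))))"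
  using K
proof (induction K rule: finite_induct)
  case empty
  then show ?case using Y by (simp add: trunc_empty pos_tp_zero[OF P] mtrace_def)
next
  case (insert x K)
  have c1: "\<Phi> (trunc n X K) \<in> carrier_mat n' n'" and c2: "\<Phi> (Emat n (fst x) (snd x)) \<in> carrier_mat n' n'"
    using P unfolding pos_tp_map_def by auto
  have "\<Phi> (trunc n X (insert x K)) = \<Phi> (trunc n X K) + (X $$ x) \<cdot>\<^sub>m \<Phi> (Emat n (fst x) (snd x))"
    unfolding trunc_insert[OF insert(2)] using P unfolding pos_tp_map_def by simp
  hence "mtrace (dag Y * \<Phi> (trunc n X (insert x K))) =
     mtrace (dag Y * \<Phi> (trunc n X K)) + X $$ x * mtrace (dag Y * \<Phi> (Emat n (fst x) (snd x)))"
  proof -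
    have c3: "dag Y * \<Phi> (trunc n X K) \<in> carrier_mat n' n'" using Y c1 by (metis dag_carrier mult_carrier_mat)
    have c4: "dag Y * \<Phi> (Emat n (fst x) (snd x)) \<in> carrier_mat n' n'" using Y c2 by (metis dag_carrier mult_carrier_mat)
    have "dag Y * (\<Phi> (trunc n X K) + (X $$ x) \<cdot>\<^sub>m \<Phi> (Emat n (fst x) (snd x))) =
      dag Y * \<Phi> (trunc n X K) + (X $$ x) \<cdot>\<^sub>m (dag Y * \<Phi> (Emat n (fst x) (snd x)))"
      using Y c1 c2 by (simp add: mult_add_distrib_mat[of _ n' n'] mult_smult_distrib[of _ n' n'])
    moreover have "mtrace (dag Y * \<Phi> (trunc n X K) + (X $$ x) \<cdot>\<^sub>m (dag Y * \<Phi> (Emat n (fst x) (snd x))))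
      = mtrace (dag Y * \<Phi> (trunc n X K)) + X $$ x * mtrace (dag Y * \<Phi> (Emat n (fst x) (snd x)))"
      using c3 c4 by (simp add: mtrace_add[of _ n'] mtrace_smult[of _ n'])
    ultimately show ?thesis using \<open>\<Phi> (trunc n X (insert x K)) = _\<close> by simp
  qed
  then show ?case using insert by simp
qed

lemma hs_adj_prop: assumes P: "pos_tp_map n n' \<Phi>" and Y: "Y \<in> carrier_mat n' n'"
  shows "hs_adj \<Phi> n Y \<in> carrier_mat n n \<and>
    (\<forall>X \<in> carrier_mat n n. mtrace (dag (hs_adj \<Phi> n Y) * X) = mtrace (dag Y * \<Phi> X))"
proof -
  define F where "F X = mtrace (dag Y * \<Phi> X)" for X
  define Z0 where "Z0 = mat n n (\<lambda>(a,b). cnj (F (Emat n a b)))"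
  have Z0c: "Z0 \<in> carrier_mat n n" by (simp add: Z0_def)
  have Z0p: "\<forall>X \<in> carrier_mat n n. mtrace (dag Z0 * X) = F X"
  proof
    fix X :: "complex mat" assume X: "X \<in> carrier_mat n n"
    have "mtrace (dag Z0 * X) = (\<Sum>a<n. \<Sum>b<n. F (Emat n b a) * X $$ (b,a))"
      unfolding mtrace_dag_mult[OF Z0c X] by (intro sum.cong refl) (simp add: Z0_def)
    also have "\<dots> = (\<Sum>b<n. \<Sum>a<n. F (Emat n b a) * X $$ (b,a))" by (rule sum.swap)
    also have "\<dots> = (\<Sum>x\<in>{..<n} \<times> {..<n}. X $$ x * F (Emat n (fst x) (snd x)))"
      by (subst sum.cartesian_product) (auto intro!: sum.cong simp: mult.commute)
    also have "\<dots> = F (trunc n X ({..<n} \<times> {..<n}))"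
      unfolding F_def by (rule F_trunc[OF P Y, symmetric]) simp
    also have "\<dots> = F X" using trunc_full[OF X] by simp
    finally show "mtrace (dag Z0 * X) = F X" .
  qed
  have "hs_adj \<Phi> n Y = Z0"
    unfolding hs_adj_def
  proof (rule the_equality)
    show "Z0 \<in> carrier_mat n n \<and> (\<forall>X\<in>carrier_mat n n. mtrace (dag Z0 * X) = mtrace (dag Y * \<Phi> X))"
      using Z0c Z0p F_def by simp
  next
    fix Z assume Z: "Z \<in> carrier_mat n n \<and> (\<forall>X\<in>carrier_mat n n. mtrace (dag Z * X) = mtrace (dag Y * \<Phi> X))"
    show "Z = Z0"
    proof (rule eq_matI)
      fix a b assume "a < dim_row Z0" "b < dim_col Z0"
      hence ab: "a < n" "b < n" using Z0c by auto
      have "cnj (Z $$ (a,b)) = F (Emat n a b)"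
        using Z mtrace_dag_E[of Z n a b] ab unfolding F_def by simp
      hence "Z $$ (a,b) = cnj (F (Emat n a b))" by (metis complex_cnj_cnj)
      thus "Z $$ (a,b) = Z0 $$ (a,b)" using ab by (simp add: Z0_def)
    qed (use Z Z0c in auto)
  qed
  thus ?thesis using Z0c Z0p F_def by simp
qed


lemma eig_nonneg: assumes "psd n (sd n u f)" "onb n u" "j < n" shows "f j \<ge> 0"
proof -
  have uj: "u j \<in> carrier_vec n" using onb_carrier[OF assms(2,3)] .
  have "cinner (u j) (sd n u f *\<^sub>v u j) = complex_of_real (f j)"
    using uj onb_inner[OF assms(2,3,3)] by (simp add: sd_mv[OF assms(2,3)] cinner_smult_right)
  thus ?thesis using assms(1) uj unfolding psd_def by (metis Re_complex_of_real)
qed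

lemma trace_sd: assumes o: "onb n u" shows "mtrace (sd n u f) = complex_of_real (\<Sum>i<n. f i)"
proof -
  have "mtrace (sd n u f) = (\<Sum>i<n. cinner (u i) (sd n u f *\<^sub>v u i))" by (rule trace_onb[OF o sd_carrier])
  also have "\<dots> = (\<Sum>i<n. complex_of_real (f i))"
    by (intro sum.cong refl) (simp add: sd_mv[OF o] cinner_smult_right[OF onb_carrier[OF o] onb_carrier[OF o]] onb_inner[OF o])
  finally show ?thesis by simp
qed

lemma trace_mult_sd: assumes o: "onb n u" and M: "M \<in> carrier_mat n n"
  shows "mtrace (M * sd n u f) = (\<Sum>i<n. complex_of_real (f i) * cinner (u i) (M *\<^sub>v u i))"
proof -
  have c: "M * sd n u f \<in> carrier_mat n n" using M by simp
  show ?thesis unfolding trace_onb[OF o c]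
  proof (intro sum.cong refl)
    fix i assume "i \<in> {..<n}"
    hence i: "i < n" by simp
    have ui: "u i \<in> carrier_vec n" using onb_carrier[OF o i] .
    have "(M * sd n u f) *\<^sub>v u i = complex_of_real (f i) \<cdot>\<^sub>v (M *\<^sub>v u i)"
      using M ui by (simp add: assoc_mult_mat_vec[of _ n n _ n] sd_mv[OF o i] mult_mat_vec[of _ n n])
    thus "cinner (u i) ((M * sd n u f) *\<^sub>v u i) = complex_of_real (f i) * cinner (u i) (M *\<^sub>v u i)"
      using M ui by (simp add: cinner_smult_right[of _ n])
  qed
qed

lemma ketbra_sd: assumes o: "onb n u" and i: "i < n"
  shows "ketbra (u i) = sd n u (\<lambda>j. if j = i then 1 else 0)"
proof (rule mat_eq_onb[OF o _ sd_carrier])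
  have ui: "u i \<in> carrier_vec n" using onb_carrier[OF o i] .
  show kc: "ketbra (u i) \<in> carrier_mat n n" using ui by (simp add: ketbra_def)
  fix j assume j: "j < n"
  have uj: "u j \<in> carrier_vec n" using onb_carrier[OF o j] .
  have "ketbra (u i) *\<^sub>v u j = cinner (u i) (u j) \<cdot>\<^sub>v u i"
  proof (rule eq_vecI)
    fix a assume "a < dim_vec (cinner (u i) (u j) \<cdot>\<^sub>v u i)"
    hence a: "a < n" using ui by simp
    have "(ketbra (u i) *\<^sub>v u j) $ a = (\<Sum>b<n. u i $ a * cnj (u i $ b) * u j $ b)"
      using kc uj a ui by (simp del: index_mult_mat_vec add: mv_idx[of _ n n]) (simp add: ketbra_def)
    also have "\<dots> = cinner (u i) (u j) * u i $ a"
      by (simp add: cinner_carrier[OF ui] sum_distrib_left sum_distrib_right mult_ac)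
    finally show "(ketbra (u i) *\<^sub>v u j) $ a = (cinner (u i) (u j) \<cdot>\<^sub>v u i) $ a" using a ui by simp
  qed (use kc ui in simp)
  also have "\<dots> = sd n u (\<lambda>j. if j = i then 1 else 0) *\<^sub>v u j"
    unfolding sd_mv[OF o j] onb_inner[OF o i j] using ui uj by (intro eq_vecI) auto
  finally show "ketbra (u i) *\<^sub>v u j = sd n u (\<lambda>j. if j = i then 1 else 0) *\<^sub>v u j" .
qed

lemma dag_ketbra: "dag (ketbra v) = ketbra v"
  by (rule eq_matI) (auto simp: dag_def ketbra_def)

lemma ketbra_carrier: "v \<in> carrier_vec m \<Longrightarrow> ketbra v \<in> carrier_mat m m"
  by (simp add: ketbra_def)

lemma trace_mult_ketbra: assumes M: "M \<in> carrier_mat m m" and v: "v \<in> carrier_vec m"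
  shows "mtrace (M * ketbra v) = cinner v (M *\<^sub>v v)"
proof -
  have kc: "ketbra v \<in> carrier_mat m m" using ketbra_carrier[OF v] .
  have c: "M * ketbra v \<in> carrier_mat m m" using M kc by simp
  have "mtrace (M * ketbra v) = (\<Sum>a<m. \<Sum>b<m. M $$ (a,b) * (v $ b * cnj (v $ a)))"
    unfolding mtrace_carrier[OF c]
  proof (intro sum.cong refl)
    fix a assume "a \<in> {..<m}"
    hence a: "a < m" by simp
    have "(M * ketbra v) $$ (a,a) = (\<Sum>b<m. M $$ (a,b) * ketbra v $$ (b,a))"
      by (rule mm_idx[OF M kc a a])
    also have "\<dots> = (\<Sum>b<m. M $$ (a,b) * (v $ b * cnj (v $ a)))"
      by (intro sum.cong refl) (use a v in \<open>simp add: ketbra_def\<close>)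
    finally show "(M * ketbra v) $$ (a,a) = (\<Sum>b<m. M $$ (a,b) * (v $ b * cnj (v $ a)))" .
  qed
  also have "\<dots> = cinner v (M *\<^sub>v v)"
    unfolding cinner_carrier[OF v]
    by (intro sum.cong refl) (use M v in \<open>simp del: index_mult_mat_vec add: mv_idx[of _ m m] sum_distrib_left mult_ac\<close>)
  finally show ?thesis .
qed

lemma supp_lemma: assumes o: "onb n u" and r: "mat_range (sd n u f) \<subseteq> mat_range (sd n u g)"
  and i: "i < n" and f: "f i \<noteq> 0" shows "g i \<noteq> 0"
proof
  assume g: "g i = 0"
  have ui: "u i \<in> carrier_vec n" using onb_carrier[OF o i] .
  have "sd n u g *\<^sub>v u i = 0\<^sub>v n" using g ui by (auto simp: sd_mv[OF o i])
  from kill[OF sd_carrier dag_sd sd_carrier dag_sd r ui this]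
  have "sd n u f *\<^sub>v u i = 0\<^sub>v n" .
  hence "cinner (u i) (sd n u f *\<^sub>v u i) = 0" by (simp add: cinner_carrier[OF ui])
  moreover have "cinner (u i) (sd n u f *\<^sub>v u i) = complex_of_real (f i)"
    using ui onb_inner[OF o i i] by (simp add: sd_mv[OF o i] cinner_smult_right)
  ultimately show False using f by simp
qed


lemma eigval: "onb m v \<Longrightarrow> j < m \<Longrightarrow> cinner (v j) (sd m v g *\<^sub>v v j) = complex_of_real (g j)"
  by (simp add: sd_mv cinner_smult_right[OF onb_carrier onb_carrier] onb_inner)

theorem mainTheorem14:
  fixes n n' :: nat and \<Phi> :: "complex mat \<Rightarrow> complex mat"
    and \<rho> \<phi> :: "complex mat"
    and u w :: "nat \<Rightarrow> complex vec" and p r p' r' :: "nat \<Rightarrow> real"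
  assumes "pos_tp_map n n' \<Phi>"
    and "density n \<rho>" and "density n \<phi>"
    and "rel_entropy_finite \<rho> \<phi>"
    and "\<rho> * \<phi> = \<phi> * \<rho>"
    and "\<Phi> \<rho> * \<Phi> \<phi> = \<Phi> \<phi> * \<Phi> \<rho>"
    and "spec_decomp n \<rho> u p" and "spec_decomp n \<phi> u r"
    and "spec_decomp n' (\<Phi> \<rho>) w p'" and "spec_decomp n' (\<Phi> \<phi>) w r'"
  shows "let pr = (\<lambda>i k. p i * Re (mtrace (\<Phi> (ketbra (u i)) * ketbra (w k))));
             m = (\<lambda>i k. (- ln (p' k) + ln (p i)) - (- ln (r' k) + ln (r i)))
         in \<exists>\<gamma>::real.
              mtrace (supp_proj \<rho> * petz \<Phi> n \<phi> (\<Phi> \<rho>)) = complex_of_real \<gamma> \<and>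
              (\<Sum>(i,k) \<in> {(i,k). i < n \<and> k < n' \<and> pr i k > 0}. pr i k * exp (- m i k)) = \<gamma> \<and>
              0 < \<gamma> \<and> \<gamma> \<le> 1 \<and>
              (mat_range \<rho> = mat_range \<phi> \<longrightarrow> \<gamma> = 1)"
proof -
  have o: "onb n u" and rho: "\<rho> = sd n u p" using assms(7) by (auto simp: spec_decomp_sd)
  have phi: "\<phi> = sd n u r" using assms(8) by (simp add: spec_decomp_sd)
  have ow: "onb n' w" and Prho: "\<Phi> \<rho> = sd n' w p'" using assms(9) by (auto simp: spec_decomp_sd)
  have Pphi: "\<Phi> \<phi> = sd n' w r'" using assms(10) by (simp add: spec_decomp_sd)
  have Pcar: "\<And>X. X \<in> carrier_mat n n \<Longrightarrow> \<Phi> X \<in> carrier_mat n' n'" using assms(1) by (simp add: pos_tp_map_def)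
  have Ppsd: "\<And>X. psd n X \<Longrightarrow> psd n' (\<Phi> X)" using assms(1) by (simp add: pos_tp_map_def)
  have Ptr: "\<And>X. X \<in> carrier_mat n n \<Longrightarrow> mtrace (\<Phi> X) = mtrace X" using assms(1) by (simp add: pos_tp_map_def)
  have rho_psd: "psd n \<rho>" and rho_tr: "mtrace \<rho> = 1" using assms(2) by (auto simp: density_def)
  have phi_psd: "psd n \<phi>" using assms(3) by (simp add: density_def)
  have p0: "\<And>i. i < n \<Longrightarrow> p i \<ge> 0" using eig_nonneg[of n u p] rho_psd rho o by simp
  have r0: "\<And>i. i < n \<Longrightarrow> r i \<ge> 0" using eig_nonneg[of n u r] phi_psd phi o by simp
  have p'0: "\<And>k. k < n' \<Longrightarrow> p' k \<ge> 0" using eig_nonneg[of n' w p'] Ppsd[OF rho_psd] Prho ow by simp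
  have r'0: "\<And>k. k < n' \<Longrightarrow> r' k \<ge> 0" using eig_nonneg[of n' w r'] Ppsd[OF phi_psd] Pphi ow by simp
  have sum_p': "(\<Sum>k<n'. p' k) = 1"
  proof -
    have "mtrace (\<Phi> \<rho>) = 1" using Ptr[of \<rho>] rho rho_tr by simp
    hence "complex_of_real (\<Sum>k<n'. p' k) = 1" using trace_sd[OF ow, of p'] Prho by metis
    thus ?thesis by (simp only: of_real_eq_1_iff)
  qed
  have wk: "\<And>k. k < n' \<Longrightarrow> w k \<in> carrier_vec n'" using onb_carrier[OF ow] .
  define K where "K i = ketbra (u i)" for i
  have Ksd: "\<And>i. i < n \<Longrightarrow> K i = sd n u (\<lambda>j. if j = i then 1 else 0)"
    using ketbra_sd[OF o] K_def by simp
  have Kc: "\<And>i. i < n \<Longrightarrow> K i \<in> carrier_mat n n" using Ksd by simp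
  have Kpsd: "\<And>i. i < n \<Longrightarrow> psd n (K i)" using Ksd psd_sd[OF _ o] by simp
  define T where "T i k = cinner (w k) (\<Phi> (K i) *\<^sub>v w k)" for i k
  define t where "t i k = Re (T i k)" for i k
  have Tt: "T i k = complex_of_real (t i k)" and t0: "t i k \<ge> 0" if i: "i < n" and k: "k < n'" for i k
  proof -
    have "Im (T i k) = 0" "Re (T i k) \<ge> 0" using Ppsd[OF Kpsd[OF i]] wk[OF k] unfolding psd_def T_def by auto
    thus "T i k = complex_of_real (t i k)" "t i k \<ge> 0" unfolding t_def by (auto simp: complex_eq_iff)
  qed
  have pr_eq: "Re (mtrace (\<Phi> (ketbra (u i)) * ketbra (w k))) = t i k" if i: "i < n" and k: "k < n'" for i k
    using trace_mult_ketbra[OF Pcar[OF Kc[OF i]] wk[OF k]] unfolding T_def t_def K_def by simp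

  have lin: "cinner (w k) (\<Phi> (sd n u f) *\<^sub>v w k) = (\<Sum>i<n. complex_of_real (f i) * T i k)"
    if k: "k < n'" for f k
  proof -
    define Zk where "Zk = hs_adj \<Phi> n (ketbra (w k))"
    have kb: "ketbra (w k) \<in> carrier_mat n' n'" using ketbra_carrier wk k by blast
    have Zk: "Zk \<in> carrier_mat n n" "\<forall>X\<in>carrier_mat n n. mtrace (dag Zk * X) = mtrace (dag (ketbra (w k)) * \<Phi> X)"
      using hs_adj_prop[OF assms(1) kb] Zk_def by auto
    have G: "cinner (w k) (\<Phi> X *\<^sub>v w k) = mtrace (dag Zk * X)" if X: "X \<in> carrier_mat n n" for X
    proof -
      have "cinner (w k) (\<Phi> X *\<^sub>v w k) = mtrace (\<Phi> X * ketbra (w k))"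
        using trace_mult_ketbra[OF Pcar[OF X] wk[OF k]] by simp
      also have "\<dots> = mtrace (ketbra (w k) * \<Phi> X)" by (rule mtrace_comm[OF Pcar[OF X] kb])
      also have "\<dots> = mtrace (dag Zk * X)" using Zk(2) X dag_ketbra by simp
      finally show ?thesis .
    qed
    define c where "c j = cinner (u j) (dag Zk *\<^sub>v u j)" for j
    have "cinner (w k) (\<Phi> (sd n u f) *\<^sub>v w k) = (\<Sum>i<n. complex_of_real (f i) * c i)"
      using G[OF sd_carrier] trace_mult_sd[OF o dag_carrier[OF Zk(1)]] c_def by simp
    moreover have "T i k = c i" if i: "i < n" for i
    proof -
      have "T i k = mtrace (dag Zk * sd n u (\<lambda>j. if j = i then 1 else 0))"
        using G[OF Kc[OF i]] T_def Ksd[OF i] by simp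
      also have "\<dots> = (\<Sum>j<n. complex_of_real (if j = i then 1 else 0) * c j)"
        using trace_mult_sd[OF o dag_carrier[OF Zk(1)]] c_def by simp
      also have "\<dots> = (\<Sum>j<n. if j = i then c j else 0)" by (intro sum.cong refl) simp
      also have "\<dots> = c i" using i by simp
      finally show "T i k = c i" .
    qed
    ultimately show ?thesis by simp
  qed
  have p'_sum: "p' k = (\<Sum>i<n. p i * t i k)" if k: "k < n'" for k
  proof -
    have "complex_of_real (p' k) = (\<Sum>i<n. complex_of_real (p i) * T i k)"
      using lin[OF k, of p] eigval[OF ow k, of p'] rho Prho by simp
    also have "\<dots> = complex_of_real (\<Sum>i<n. p i * t i k)" using Tt k by simp
    finally show ?thesis by (simp only: of_real_eq_iff)
  qed
  have r'_sum: "r' k = (\<Sum>i<n. r i * t i k)" if k: "k < n'" for k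
  proof -
    have "complex_of_real (r' k) = (\<Sum>i<n. complex_of_real (r i) * T i k)"
      using lin[OF k, of r] eigval[OF ow k, of r'] phi Pphi by simp
    also have "\<dots> = complex_of_real (\<Sum>i<n. r i * t i k)" using Tt k by simp
    finally show ?thesis by (simp only: of_real_eq_iff)
  qed
  have supp: "r i \<noteq> 0" if i: "i < n" and pi: "p i \<noteq> 0" for i
    using supp_lemma[of n u p r i] o i pi assms(4) rho phi unfolding rel_entropy_finite_def by simp

  define chi where "chi i = (if p i \<noteq> 0 then 1 else 0 :: real)" for i
  define g where "g k = (if r' k \<noteq> 0 then 1 / sqrt (r' k) else 0)" for k
  define y where "y k = g k * p' k * g k" for k
  have yk: "y k = (if r' k \<noteq> 0 then p' k / r' k else 0)" if k: "k < n'" for k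
  proof (cases "r' k = 0")
    case False
    hence "sqrt (r' k) * sqrt (r' k) = r' k" using r'0[OF k] by simp
    thus ?thesis using False unfolding y_def g_def by (simp add: divide_simps)
  qed (simp add: y_def g_def)
  have y0: "y k \<ge> 0" if k: "k < n'" for k using yk[OF k] p'0[OF k] r'0[OF k] by simp
  have sq: "msqrt \<phi> = sd n u (\<lambda>i. sqrt (r i))" unfolding phi by (rule msqrt_sd[OF o]) (rule r0)
  have Pi: "supp_proj \<rho> = sd n u chi" unfolding rho supp_proj_sd[OF o] chi_def ..
  have pinv: "pinv_sqrt (\<Phi> \<phi>) = sd n' w g" unfolding Pphi g_def by (rule pinv_sqrt_sd[OF ow]) (rule r'0)
  have Y: "pinv_sqrt (\<Phi> \<phi>) * \<Phi> \<rho> * pinv_sqrt (\<Phi> \<phi>) = sd n' w y"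
    unfolding pinv Prho sd_mult[OF ow] by (rule sd_cong) (simp add: y_def)
  define Z where "Z = hs_adj \<Phi> n (sd n' w y)"
  have Z: "Z \<in> carrier_mat n n" "\<forall>X\<in>carrier_mat n n. mtrace (dag Z * X) = mtrace (dag (sd n' w y) * \<Phi> X)"
    using hs_adj_prop[OF assms(1) sd_carrier] Z_def by auto
  define S where "S = sd n u (\<lambda>i. sqrt (r i))"
  have petz: "petz \<Phi> n \<phi> (\<Phi> \<rho>) = S * Z * S" unfolding petz_def sq Y Z_def S_def ..
  have zi: "cinner (u i) (Z *\<^sub>v u i) = complex_of_real (\<Sum>k<n'. y k * t i k)" if i: "i < n" for i
  proof -
    have ui: "u i \<in> carrier_vec n" using onb_carrier[OF o i] .
    have "mtrace (dag Z * K i) = (\<Sum>j<n. complex_of_real (if j = i then 1 else 0) * cinner (u j) (dag Z *\<^sub>v u j))"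
      unfolding Ksd[OF i] by (rule trace_mult_sd[OF o dag_carrier[OF Z(1)]])
    also have "\<dots> = (\<Sum>j<n. if j = i then cinner (u j) (dag Z *\<^sub>v u j) else 0)" by (intro sum.cong refl) simp
    also have "\<dots> = cinner (u i) (dag Z *\<^sub>v u i)" using i by simp
    also have "\<dots> = cinner (Z *\<^sub>v u i) (u i)"
      using cinner_dag[OF dag_carrier[OF Z(1)] ui ui] dag_dag[OF Z(1)] by simp
    also have "\<dots> = cnj (cinner (u i) (Z *\<^sub>v u i))" by (rule cinner_sym[OF mult_mat_vec_carrier[OF Z(1) ui] ui])
    finally have e1: "mtrace (dag Z * K i) = cnj (cinner (u i) (Z *\<^sub>v u i))" .
    have "mtrace (dag Z * K i) = mtrace (sd n' w y * \<Phi> (K i))" using Z(2) Kc[OF i] dag_sd by simp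
    also have "\<dots> = mtrace (\<Phi> (K i) * sd n' w y)" by (rule mtrace_comm[OF sd_carrier Pcar[OF Kc[OF i]]])
    also have "\<dots> = (\<Sum>k<n'. complex_of_real (y k) * T i k)"
      unfolding trace_mult_sd[OF ow Pcar[OF Kc[OF i]]] T_def ..
    also have "\<dots> = complex_of_real (\<Sum>k<n'. y k * t i k)" using Tt i by simp
    finally have "cnj (cinner (u i) (Z *\<^sub>v u i)) = complex_of_real (\<Sum>k<n'. y k * t i k)" using e1 by simp
    hence "cnj (cnj (cinner (u i) (Z *\<^sub>v u i))) = cnj (complex_of_real (\<Sum>k<n'. y k * t i k))" by (rule arg_cong)
    thus ?thesis by (simp only: complex_cnj_cnj complex_cnj_complex_of_real)
  qed
  define \<gamma> where "\<gamma> = (\<Sum>i<n. chi i * (r i * (\<Sum>k<n'. y k * t i k)))"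
  have tr: "mtrace (supp_proj \<rho> * petz \<Phi> n \<phi> (\<Phi> \<rho>)) = complex_of_real \<gamma>"
  proof -
    have Sc: "S \<in> carrier_mat n n" by (simp add: S_def)
    have Mc: "S * Z * S \<in> carrier_mat n n" using Sc Z(1) by simp
    have "mtrace (supp_proj \<rho> * petz \<Phi> n \<phi> (\<Phi> \<rho>)) = mtrace ((S * Z * S) * sd n u chi)"
      unfolding Pi petz by (rule mtrace_comm[OF sd_carrier Mc])
    also have "\<dots> = (\<Sum>i<n. complex_of_real (chi i) * cinner (u i) ((S * Z * S) *\<^sub>v u i))"
      by (rule trace_mult_sd[OF o Mc])
    also have "\<dots> = (\<Sum>i<n. complex_of_real (chi i * (r i * (\<Sum>k<n'. y k * t i k))))"
    proof (intro sum.cong refl)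
      fix i assume "i \<in> {..<n}"
      hence i: "i < n" by simp
      have ui: "u i \<in> carrier_vec n" using onb_carrier[OF o i] .
      have Su: "S *\<^sub>v u i = complex_of_real (sqrt (r i)) \<cdot>\<^sub>v u i" unfolding S_def by (rule sd_mv[OF o i])
      have "(S * Z * S) *\<^sub>v u i = (S * Z) *\<^sub>v (S *\<^sub>v u i)"
        by (rule assoc_mult_mat_vec[of _ n n _ n]) (use Sc Z(1) ui in auto)
      also have "\<dots> = S *\<^sub>v (Z *\<^sub>v (S *\<^sub>v u i))"
        by (rule assoc_mult_mat_vec[of _ n n _ n]) (use Sc Z(1) ui in auto)
      also have "\<dots> = complex_of_real (sqrt (r i)) \<cdot>\<^sub>v (S *\<^sub>v (Z *\<^sub>v u i))"
        unfolding Su using Sc Z(1) ui by (simp add: mult_mat_vec[of _ n n])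
      finally have e: "(S * Z * S) *\<^sub>v u i = complex_of_real (sqrt (r i)) \<cdot>\<^sub>v (S *\<^sub>v (Z *\<^sub>v u i))" .
      have zc: "Z *\<^sub>v u i \<in> carrier_vec n" using Z(1) ui by simp
      have "cinner (u i) (S *\<^sub>v (Z *\<^sub>v u i)) = cinner (S *\<^sub>v u i) (Z *\<^sub>v u i)"
        using cinner_dag[OF Sc ui zc] by (simp add: S_def dag_sd)
      also have "\<dots> = complex_of_real (sqrt (r i)) * cinner (u i) (Z *\<^sub>v u i)"
        unfolding Su using cinner_smult_left[OF ui zc] by simp
      finally have "cinner (u i) ((S * Z * S) *\<^sub>v u i) = complex_of_real (sqrt (r i)) * (complex_of_real (sqrt (r i)) * cinner (u i) (Z *\<^sub>v u i))"
        unfolding e using cinner_smult_right[of "u i" n] ui Sc zc by simp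
      also have "\<dots> = (complex_of_real (sqrt (r i)) * complex_of_real (sqrt (r i))) * cinner (u i) (Z *\<^sub>v u i)"
        by (rule mult.assoc[symmetric])
      also have "complex_of_real (sqrt (r i)) * complex_of_real (sqrt (r i)) = complex_of_real (r i)"
        using r0[OF i] by (metis of_real_mult real_sqrt_mult_self abs_of_nonneg)
      also have "complex_of_real (r i) * cinner (u i) (Z *\<^sub>v u i) = complex_of_real (r i * (\<Sum>k<n'. y k * t i k))"
        unfolding zi[OF i] of_real_mult ..
      finally show "complex_of_real (chi i) * cinner (u i) ((S * Z * S) *\<^sub>v u i) =
        complex_of_real (chi i * (r i * (\<Sum>k<n'. y k * t i k)))" by simp
    qed
    also have "\<dots> = complex_of_real \<gamma>" unfolding \<gamma>_def of_real_sum ..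
    finally show ?thesis .
  qed

  have supp2: "p i \<noteq> 0" if i: "i < n" and ri: "r i \<noteq> 0" and eqr: "mat_range \<rho> = mat_range \<phi>" for i
    using supp_lemma[of n u r p i] o i ri eqr rho phi by simp
  define SS where "SS = {(i,k). i < n \<and> k < n' \<and> p i * Re (mtrace (\<Phi> (ketbra (u i)) * ketbra (w k))) > 0}"
  define F where "F = (\<lambda>(i,k). p i * Re (mtrace (\<Phi> (ketbra (u i)) * ketbra (w k))) *
      exp (- ((- ln (p' k) + ln (p i)) - (- ln (r' k) + ln (r i)))))"
  define h where "h = (\<lambda>(i,k). chi i * r i * y k * t i k)"
  have SSsub: "SS \<subseteq> {..<n} \<times> {..<n'}" by (auto simp: SS_def)
  have memSS: "(i,k) \<in> SS \<longleftrightarrow> i < n \<and> k < n' \<and> p i * t i k > 0" for i k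
    using pr_eq by (auto simp: SS_def)
  have ptnn: "p i * t i k \<ge> 0" if "i < n" "k < n'" for i k using p0 t0 that by simp
  have rtnn: "r i * t i k \<ge> 0" if "i < n" "k < n'" for i k using r0 t0 that by simp
  have pos_in: "p i > 0 \<and> t i k > 0 \<and> r i > 0 \<and> p' k > 0 \<and> r' k > 0" if x: "(i,k) \<in> SS" for i k
  proof -
    from x have ik: "i < n" "k < n'" and pt: "p i * t i k > 0" by (auto simp: memSS)
    have pi: "p i > 0" using pt p0[OF ik(1)] t0[OF ik] by (simp add: zero_less_mult_iff)
    have ti: "t i k > 0" using pt p0[OF ik(1)] t0[OF ik] by (simp add: zero_less_mult_iff)
    have ri: "r i > 0" using supp[OF ik(1)] pi r0[OF ik(1)] by force
    have "p i * t i k \<le> (\<Sum>j<n. p j * t j k)" by (rule member_le_sum) (use ik ptnn in auto)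
    hence p'k: "p' k > 0" using p'_sum[OF ik(2)] pt by simp
    have "r i * t i k \<le> (\<Sum>j<n. r j * t j k)" by (rule member_le_sum) (use ik rtnn in auto)
    moreover have "r i * t i k > 0" using ri ti by simp
    ultimately have r'k: "r' k > 0" using r'_sum[OF ik(2)] by simp
    show ?thesis using pi ti ri p'k r'k by simp
  qed
  have gam_h: "\<gamma> = sum h ({..<n} \<times> {..<n'})"
    unfolding \<gamma>_def h_def sum.cartesian_product[symmetric]
    by (simp add: sum_distrib_left mult.assoc)
  have F1: "sum F SS = \<gamma>"
  proof -
    have "sum F SS = sum h ({..<n} \<times> {..<n'})"
    proof (rule sum.mono_neutral_cong_left[OF _ SSsub])
      show "finite ({..<n} \<times> {..<n'})" by simp
      show "\<forall>x\<in>{..<n} \<times> {..<n'} - SS. h x = 0"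
      proof
        fix x assume x: "x \<in> {..<n} \<times> {..<n'} - SS"
        obtain i k where xik: "x = (i,k)" by (cases x)
        have ik: "i < n" "k < n'" and np: "\<not> (p i * t i k > 0)" using x xik memSS by auto
        hence "p i * t i k = 0" using ptnn[OF ik] by simp
        hence "p i = 0 \<or> t i k = 0" by simp
        thus "h x = 0" using xik by (auto simp: h_def chi_def)
      qed
      fix x assume x: "x \<in> SS"
      obtain i k where xik: "x = (i,k)" by (cases x)
      have ik: "i < n" "k < n'" using x xik memSS by auto
      have pos: "p i > 0" "t i k > 0" "r i > 0" "p' k > 0" "r' k > 0" using pos_in x xik by auto
      have ex: "exp (- ((- ln (p' k) + ln (p i)) - (- ln (r' k) + ln (r i)))) = p' k * r i / (p i * r' k)"
      proof -
        have "- ((- ln (p' k) + ln (p i)) - (- ln (r' k) + ln (r i))) = ln (p' k * r i / (p i * r' k))"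
          using pos by (simp add: ln_div ln_mult)
        thus ?thesis using pos by simp
      qed
      have "F x = p i * t i k * (p' k * r i / (p i * r' k))"
        unfolding xik F_def prod.case pr_eq[OF ik] ex ..
      also have "\<dots> = chi i * r i * y k * t i k" using pos yk[OF ik(2)] by (simp add: chi_def field_simps)
      finally show "F x = h x" unfolding xik h_def by simp
    qed
    thus ?thesis using gam_h by simp
  qed
  have gpos: "\<gamma> > 0"
  proof -
    have ne: "SS \<noteq> {}"
    proof
      assume e: "SS = {}"
      have "p' k = 0" if k: "k < n'" for k
      proof -
        have "p i * t i k = 0" if i: "i < n" for i
          using e memSS[of i k] i k ptnn[OF i k] by auto
        hence "(\<Sum>i<n. p i * t i k) = 0" by (intro sum.neutral) auto
        thus ?thesis using p'_sum[OF k] by simp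
      qed
      hence "(\<Sum>k<n'. p' k) = 0" by simp
      thus False using sum_p' by simp
    qed
    have "0 < sum F SS"
    proof (rule sum_pos)
      show "finite SS" using SSsub finite_subset by blast
      show "SS \<noteq> {}" by (rule ne)
      fix x assume x: "x \<in> SS"
      obtain i k where xik: "x = (i,k)" by (cases x)
      have ik: "i < n" "k < n'" using x xik memSS by auto
      have pos: "p i > 0" "t i k > 0" using pos_in x xik by auto
      show "0 < F x" unfolding xik F_def using pos pr_eq[OF ik] by simp
    qed
    thus ?thesis using F1 by simp
  qed
  have B: "(\<Sum>i<n. r i * (\<Sum>k<n'. y k * t i k)) = (\<Sum>k<n'. y k * r' k)"
  proof -
    have "(\<Sum>i<n. r i * (\<Sum>k<n'. y k * t i k)) = (\<Sum>i<n. \<Sum>k<n'. y k * (r i * t i k))"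
      by (simp add: sum_distrib_left mult_ac)
    also have "\<dots> = (\<Sum>k<n'. \<Sum>i<n. y k * (r i * t i k))" by (rule sum.swap)
    also have "\<dots> = (\<Sum>k<n'. y k * r' k)"
      by (intro sum.cong refl) (simp add: r'_sum sum_distrib_left)
    finally show ?thesis .
  qed
  have gle: "\<gamma> \<le> 1"
  proof -
    have "\<gamma> \<le> (\<Sum>i<n. r i * (\<Sum>k<n'. y k * t i k))"
      unfolding \<gamma>_def
    proof (rule sum_mono)
      fix i assume "i \<in> {..<n}"
      hence i: "i < n" by simp
      have "0 \<le> r i * (\<Sum>k<n'. y k * t i k)"
        using r0[OF i] y0 t0[OF i] by (intro mult_nonneg_nonneg sum_nonneg) auto
      thus "chi i * (r i * (\<Sum>k<n'. y k * t i k)) \<le> r i * (\<Sum>k<n'. y k * t i k)"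
        by (simp add: chi_def)
    qed
    also have "\<dots> = (\<Sum>k<n'. y k * r' k)" by (rule B)
    also have "\<dots> \<le> (\<Sum>k<n'. p' k)"
    proof (rule sum_mono)
      fix k assume "k \<in> {..<n'}"
      hence k: "k < n'" by simp
      show "y k * r' k \<le> p' k" using yk[OF k] p'0[OF k] by simp
    qed
    finally show ?thesis using sum_p' by simp
  qed
  have geq: "\<gamma> = 1" if eqr: "mat_range \<rho> = mat_range \<phi>"
  proof -
    have "\<gamma> = (\<Sum>i<n. r i * (\<Sum>k<n'. y k * t i k))"
      unfolding \<gamma>_def
    proof (intro sum.cong refl)
      fix i assume "i \<in> {..<n}"
      hence i: "i < n" by simp
      show "chi i * (r i * (\<Sum>k<n'. y k * t i k)) = r i * (\<Sum>k<n'. y k * t i k)"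
        using supp2[OF i _ eqr] by (cases "r i = 0") (auto simp: chi_def)
    qed
    also have "\<dots> = (\<Sum>k<n'. y k * r' k)" by (rule B)
    also have "\<dots> = (\<Sum>k<n'. p' k)"
    proof (intro sum.cong refl)
      fix k assume "k \<in> {..<n'}"
      hence k: "k < n'" by simp
      show "y k * r' k = p' k"
      proof (cases "r' k = 0")
        case True
        have s0: "(\<Sum>i<n. r i * t i k) = 0" using r'_sum[OF k] True by simp
        have "\<forall>i\<in>{..<n}. r i * t i k = 0"
          using s0 sum_nonneg_eq_0_iff[of "{..<n}" "\<lambda>i. r i * t i k"] rtnn k by auto
        hence "p i * t i k = 0" if i: "i < n" for i
          using supp[OF i] i by (cases "p i = 0") auto
        hence "(\<Sum>i<n. p i * t i k) = 0" by (intro sum.neutral) auto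
        hence "p' k = 0" using p'_sum[OF k] by simp
        thus ?thesis using True by simp
      qed (simp add: yk[OF k])
    qed
    finally show ?thesis using sum_p' by simp
  qed
  show ?thesis unfolding Let_def
    apply (rule exI[of _ \<gamma>])
    using tr F1 gpos gle geq unfolding SS_def F_def by simp
qed
end
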